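(* Let $m,n\ge1$ with $(m,n)=1$, let $d_1,\dots,d_{\tau(m)}$ and $e_1,\dots,e_{\tau(n)}$ be orderings of the positive divisors of $m$ and $n$, and order the divisors of $mn$ as $f_{\sigma(i,i')}=d_ie_{i'}$, where $\sigma(i,i')=(i-1)\tau(n)+i'$ (lexicographic order). With the matrices $M_i(N),D_i(N),W(N)$ defined as in the context (for $N=m$, $n$, $mn$ with these divisor orderings), we have, for all $1\le i,j,k\le\tau(m)$ and $1\le i',j',k'\le\tau(n)$, $$[M_{\sigma(i,i')}(mn)]_{\sigma(j,j'),\sigma(k,k')}=[M_i(m)]_{j,k}[M_{i'}(n)]_{j',k'},$$ $$[D_{\sigma(i,i')}(mn)]_{\sigma(j,j'),\sigma(k,k')}=[D_i(m)]_{j,k}[D_{i'}(n)]_{j',k'},$$ $$[W(mn)]_{\sigma(j,j'),\sigma(k,k')}=[W(m)]_{j,k}[W(n)]_{j',k'}.$$ That is, $M_{\sigma(i,i')}(mn)=M_i(m)\otimes M_{i'}(n)$, $D_{\sigma(i,i')}(mn)=D_i(m)\otimes D_{i'}(n)$, $W(mn)=W(m)\otimes W(n)$. Moreover $W(mn)=S(mn)$, where $[S(mn)]_{j,k}=c_{f_j}(mn/f_k)$.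
   Context: For integers $N\ge1$ and $x$, $c_N(x)=\sum_{1\le j\le N,\ (j,N)=1}e^{2\pi ijx/N}$ is the Ramanujan sum; $\phi$ is Euler's totient, $\tau(N)$ the number of divisors of $N$. Given an ordering $d_1,\dots,d_{\tau(N)}$ of the divisors of $N$, let $K_j=\{a\in\mathbb{Z}/N\mathbb{Z}:(a,N)=N/d_j\}$ (so $|K_j|=\phi(d_j)$). For $1\le i,j,k\le\tau(N)$, let $a_{i,j,k}(N)$ be the number of $(x,y)\in K_i\times K_j$ with $x+y=z$ in $\mathbb{Z}/N\mathbb{Z}$, for a fixed $z\in K_k$ (independent of the choice of $z$). Define $M_i(N)=(a_{i,j,k}(N))_{j,k}$, $W(N)=(w_{j,k})_{j,k}$ with $w_{j,k}=\phi(d_j)c_{d_k}(N/d_j)/\phi(d_k)$, and $D_i(N)=\operatorname{diag}(w_{i,1},\dots,w_{i,\tau(N)})$. *)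

theory Defs
  imports "HOL-Analysis.Analysis" "HOL-Number_Theory.Number_Theory"
begin

definition ramanujan_sum :: "nat \<Rightarrow> int \<Rightarrow> complex" where
  "ramanujan_sum N x =
     (\<Sum>j\<in>{j\<in>{1..N}. coprime j N}. exp (2 * of_real pi * \<i> * of_int (int j * x) / of_nat N))"

definition num_divisors :: "nat \<Rightarrow> nat" where
  "num_divisors N = card {e. e dvd N}"

definition divisor_ordering :: "nat \<Rightarrow> (nat \<Rightarrow> nat) \<Rightarrow> bool" where
  "divisor_ordering N d \<longleftrightarrow> bij_betw d {1..num_divisors N} {e. e dvd N}"

definition Kset :: "nat \<Rightarrow> (nat \<Rightarrow> nat) \<Rightarrow> nat \<Rightarrow> nat set" where
  "Kset N d j = {a. a < N \<and> gcd a N = N div d j}"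

text \<open>a_{i,j,k}(N): number of (x,y) in K_i x K_j with x+y = z mod N, for the fixed
  representative z = N/d_k (mod N) of K_k.\<close>
definition acount :: "nat \<Rightarrow> (nat \<Rightarrow> nat) \<Rightarrow> nat \<Rightarrow> nat \<Rightarrow> nat \<Rightarrow> nat" where
  "acount N d i j k =
     card {(x, y). x \<in> Kset N d i \<and> y \<in> Kset N d j \<and> (x + y) mod N = (N div d k) mod N}"

definition Mmat :: "nat \<Rightarrow> (nat \<Rightarrow> nat) \<Rightarrow> nat \<Rightarrow> nat \<Rightarrow> nat \<Rightarrow> nat" where
  "Mmat N d i j k = acount N d i j k"

definition Wmat :: "nat \<Rightarrow> (nat \<Rightarrow> nat) \<Rightarrow> nat \<Rightarrow> nat \<Rightarrow> complex" where
  "Wmat N d j k = of_nat (totient (d j)) * ramanujan_sum (d k) (int (N div d j)) / of_nat (totient (d k))"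

definition Dmat :: "nat \<Rightarrow> (nat \<Rightarrow> nat) \<Rightarrow> nat \<Rightarrow> nat \<Rightarrow> nat \<Rightarrow> complex" where
  "Dmat N d i j k = (if j = k then Wmat N d i j else 0)"

definition Smat :: "nat \<Rightarrow> (nat \<Rightarrow> nat) \<Rightarrow> nat \<Rightarrow> nat \<Rightarrow> complex" where
  "Smat N d j k = ramanujan_sum (d j) (int (N div d k))"

definition lex_index :: "nat \<Rightarrow> nat \<Rightarrow> nat \<Rightarrow> nat" where
  "lex_index tn i i' = (i - 1) * tn + i'"

end

theory Submission
  imports Defs
begin




lemma gcd_mult_cop:
  fixes x m n :: nat
  assumes "coprime m n"
  shows "gcd x (m*n) = gcd x m * gcd x n"
proof (rule dvd_antisym)
  obtain b' c' where bc: "gcd x (m*n) = b' * c'" "b' dvd m" "c' dvd n"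
    using division_decomp[of "gcd x (m*n)" m n] by auto
  have "b' dvd x" "c' dvd x" using bc by (metis dvd_mult_right dvd_mult_left gcd_dvd1 dvd_trans)+
  hence "b' dvd gcd x m" "c' dvd gcd x n" using bc by auto
  thus "gcd x (m*n) dvd gcd x m * gcd x n" using bc by (simp add: mult_dvd_mono)
next
  have c: "coprime (gcd x m) (gcd x n)" using assms
    by (meson coprime_imp_coprime gcd_dvd2 dvd_trans)
  have "gcd x m * gcd x n dvd x" using c by (simp add: divides_mult)
  moreover have "gcd x m * gcd x n dvd m * n" by (simp add: mult_dvd_mono)
  ultimately show "gcd x m * gcd x n dvd gcd x (m*n)" by simp
qed

lemma gcd_dvd_split:
  fixes a b m n :: nat
  assumes "coprime m n" "a dvd m" "b dvd n"
  shows "gcd (a*b) m = a"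
  by (metis assms(1,2,3) coprime_mult_right_iff dvd_mult_div_cancel
    gcd_mult_left_right_cancel gcd_nat.order_iff)

lemma gcd_split_iff:
  fixes x g h m n :: nat
  assumes "coprime m n" "g dvd m" "h dvd n"
  shows "gcd x (m*n) = g*h \<longleftrightarrow> gcd x m = g \<and> gcd x n = h"
proof
  assume H: "gcd x (m*n) = g*h"
  hence E: "gcd x m * gcd x n = g * h" using gcd_mult_cop[OF assms(1)] by simp
  have "gcd (gcd x m * gcd x n) m = gcd x m"
    using gcd_dvd_split[OF assms(1)] by simp
  moreover have "gcd (g*h) m = g" using gcd_dvd_split[OF assms] .
  moreover have "gcd (gcd x n * gcd x m) n = gcd x n"
    using gcd_dvd_split[of n m] assms(1) by (simp add: coprime_commute)
  moreover have "gcd (h*g) n = h" using gcd_dvd_split[of n m h g] assms by (simp add: coprime_commute)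
  ultimately show "gcd x m = g \<and> gcd x n = h" using E by (metis mult.commute)
next
  assume "gcd x m = g \<and> gcd x n = h"
  thus "gcd x (m*n) = g*h" using gcd_mult_cop[OF assms(1)] by simp
qed




definition Aset :: "nat \<Rightarrow> nat \<Rightarrow> nat \<Rightarrow> nat \<Rightarrow> (nat \<times> nat) set" where
  "Aset N g1 g2 z = {(x,y). x < N \<and> y < N \<and> gcd x N = g1 \<and> gcd y N = g2 \<and> (x+y) mod N = z mod N}"

lemma acount_Aset: "acount N d i j k = card (Aset N (N div d i) (N div d j) (N div d k))"
  unfolding acount_def Kset_def Aset_def by (rule arg_cong[where f=card]) auto

lemma finite_Aset[simp]: "finite (Aset N g1 g2 z)"
  by (rule finite_subset[of _ "{..<N} \<times> {..<N}"]) (auto simp: Aset_def)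

lemma Aset_mod: "Aset N g1 g2 (z mod N) = Aset N g1 g2 z"
  by (simp add: Aset_def)

lemma Aset_unit_le: assumes "N > 0" "coprime u N"
  shows "card (Aset N g1 g2 z) \<le> card (Aset N g1 g2 (u*z))"
proof -
  let ?h = "\<lambda>(x,y). (u*x mod N, u*y mod N)"
  have inj1: "x = x'" if "x < N" "x' < N" "u*x mod N = u*x' mod N" for x x' :: nat
  proof -
    have "[x * u = x' * u] (mod N)" using that(3) by (simp add: cong_def mult.commute)
    hence "[x = x'] (mod N)" using cong_mult_rcancel_nat[OF assms(2)] by blast
    thus "x = x'" using that(1,2) by (simp add: cong_def)
  qed
  have inj: "inj_on ?h (Aset N g1 g2 z)"
  proof (rule inj_onI)
    fix p q assume p: "p \<in> Aset N g1 g2 z" and q: "q \<in> Aset N g1 g2 z" and e: "?h p = ?h q"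
    obtain x y where pp: "p = (x,y)" by (cases p)
    obtain x' y' where qq: "q = (x',y')" by (cases q)
    have "x < N" "y < N" using p pp by (auto simp: Aset_def)
    moreover have "x' < N" "y' < N" using q qq by (auto simp: Aset_def)
    moreover have "u*x mod N = u*x' mod N" "u*y mod N = u*y' mod N" using e pp qq by auto
    ultimately show "p = q" using pp qq inj1 by metis
  qed
  have g: "gcd (u*x mod N) N = gcd x N" for x
  proof -
    have "gcd (u*x mod N) N = gcd (u*x) N" using assms(1) by (simp add: gcd_mod_left)
    also have "\<dots> = gcd x N" by (rule gcd_mult_left_left_cancel) (use assms(2) coprime_commute in blast)
    finally show ?thesis .
  qed
  have s: "(u*x mod N + u*y mod N) mod N = u*z mod N" if "(x+y) mod N = z mod N" for x y
  proof -
    have "(u*x mod N + u*y mod N) mod N = (u*x + u*y) mod N" by (simp add: mod_add_eq)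
    also have "\<dots> = (u*(x+y)) mod N" by (simp add: distrib_left)
    also have "\<dots> = (u*((x+y) mod N)) mod N" by (simp add: mod_mult_right_eq)
    also have "\<dots> = (u*(z mod N)) mod N" using that by simp
    also have "\<dots> = u*z mod N" by (simp add: mod_mult_right_eq)
    finally show ?thesis .
  qed
  have sub: "?h ` Aset N g1 g2 z \<subseteq> Aset N g1 g2 (u*z)"
  proof
    fix w assume "w \<in> ?h ` Aset N g1 g2 z"
    then obtain x y where xy: "(x,y) \<in> Aset N g1 g2 z" "w = ?h (x,y)" by auto
    have a: "gcd x N = g1" "gcd y N = g2" "(x+y) mod N = z mod N" using xy(1) by (auto simp: Aset_def)
    have "u*x mod N < N" "u*y mod N < N" using assms(1) by auto
    thus "w \<in> Aset N g1 g2 (u*z)" using xy(2) a g s[OF a(3)] by (simp add: Aset_def)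
  qed
  show ?thesis by (rule card_inj_on_le[OF inj sub finite_Aset])
qed

lemma Aset_unit: assumes "N > 0" "coprime u N"
  shows "card (Aset N g1 g2 (u*z)) = card (Aset N g1 g2 z)"
proof -
  obtain v where v: "[u * v = Suc 0] (mod N)" using cong_solve_coprime_nat[OF assms(2)] by blast
  have cv: "coprime v N" using coprime_iff_invertible_nat[of v N] v by (metis mult.commute)
  have vz: "(v * (u * z)) mod N = z mod N"
  proof -
    have "(v * (u * z)) mod N = ((u * v) * z) mod N" by (simp add: mult.assoc mult.left_commute)
    also have "\<dots> = (((u * v) mod N) * z) mod N" by (simp add: mod_mult_left_eq)
    also have "\<dots> = ((Suc 0 mod N) * z) mod N" using v by (simp add: cong_def)
    also have "\<dots> = z mod N" by (simp add: mod_mult_left_eq)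
    finally show ?thesis .
  qed
  have "card (Aset N g1 g2 (u*z)) \<le> card (Aset N g1 g2 (v * (u * z)))"
    by (rule Aset_unit_le[OF assms(1) cv])
  also have "Aset N g1 g2 (v * (u * z)) = Aset N g1 g2 z" using vz by (metis Aset_mod)
  finally have "card (Aset N g1 g2 (u*z)) \<le> card (Aset N g1 g2 z)" .
  thus ?thesis using Aset_unit_le[OF assms, of g1 g2 z] by linarith
qed

lemma mod_mn: "(a::nat) mod (m*n) mod m = a mod m" "(a::nat) mod (m*n) mod n = a mod n"
  by (simp_all add: mod_mod_cancel)

lemma Aset_crt:
  assumes cop: "coprime m n" and "m > 0" "n > 0" and dv: "g1 dvd m" "g2 dvd m" "h1 dvd n" "h2 dvd n"
  shows "card (Aset (m*n) (g1*h1) (g2*h2) z) = card (Aset m g1 g2 z) * card (Aset n h1 h2 z)"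
proof -
  let ?phi = "\<lambda>(x,y). ((x mod m, y mod m), (x mod n, y mod n))"
  let ?A = "Aset (m*n) (g1*h1) (g2*h2) z"
  let ?B = "Aset m g1 g2 z \<times> Aset n h1 h2 z"
  have mn: "m * n > 0" using assms by simp
  have sumc: "(a mod k + b mod k) mod k = (a + b) mod k" for a b k :: nat by (simp add: mod_add_eq)
  have into: "?phi p \<in> ?B" if "p \<in> ?A" for p
  proof -
    obtain x y where p: "p = (x,y)" by (cases p)
    have A: "x < m*n" "y < m*n" "gcd x (m*n) = g1*h1" "gcd y (m*n) = g2*h2" "(x+y) mod (m*n) = z mod (m*n)"
      using that p by (auto simp: Aset_def)
    have G1: "gcd x m = g1 \<and> gcd x n = h1" using gcd_split_iff[OF cop dv(1) dv(3)] A(3) by simp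
    have G2: "gcd y m = g2 \<and> gcd y n = h2" using gcd_split_iff[OF cop dv(2) dv(4)] A(4) by simp
    have G: "gcd x m = g1" "gcd x n = h1" "gcd y m = g2" "gcd y n = h2" using G1 G2 by auto
    have Sm: "(x+y) mod m = z mod m" using A(5) mod_mn[of "x+y" m n] mod_mn[of z m n] by simp
    have Sn: "(x+y) mod n = z mod n" using A(5) mod_mn[of "x+y" m n] mod_mn[of z m n] by simp
    show ?thesis using p G Sm Sn assms(2,3) by (simp add: Aset_def sumc gcd_mod_left)
  qed
  have inj: "inj_on ?phi ?A"
  proof (rule inj_onI, clarify)
    fix x y x' y' assume a: "(x,y) \<in> ?A" "(x',y') \<in> ?A"
      and e: "x mod m = x' mod m" "y mod m = y' mod m" "x mod n = x' mod n" "y mod n = y' mod n"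
    have "[x = x'] (mod m*n)" using e(1,3) cop coprime_cong_mult_nat unfolding cong_def by blast
    moreover have "[y = y'] (mod m*n)" using e(2,4) cop coprime_cong_mult_nat unfolding cong_def by blast
    ultimately show "x = x' \<and> y = y'" using a by (auto simp: Aset_def cong_def)
  qed
  have onto: "?B \<subseteq> ?phi ` ?A"
  proof clarify
    fix x1 y1 x2 y2 assume b1: "(x1,y1) \<in> Aset m g1 g2 z" and b2: "(x2,y2) \<in> Aset n h1 h2 z"
    obtain x where x: "[x = x1] (mod m)" "[x = x2] (mod n)" using binary_chinese_remainder_nat[OF cop] by blast
    obtain y where y: "[y = y1] (mod m)" "[y = y2] (mod n)" using binary_chinese_remainder_nat[OF cop] by blast
    define x0 where "x0 = x mod (m*n)"
    define y0 where "y0 = y mod (m*n)"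
    have B1: "x1 < m" "y1 < m" "gcd x1 m = g1" "gcd y1 m = g2" "(x1+y1) mod m = z mod m"
      using b1 by (auto simp: Aset_def)
    have B2: "x2 < n" "y2 < n" "gcd x2 n = h1" "gcd y2 n = h2" "(x2+y2) mod n = z mod n"
      using b2 by (auto simp: Aset_def)
    have xm: "x0 mod m = x1" using x(1) B1(1) mod_mn[of x m n] unfolding x0_def cong_def by simp
    have xn: "x0 mod n = x2" using x(2) B2(1) mod_mn[of x m n] unfolding x0_def cong_def by simp
    have ym: "y0 mod m = y1" using y(1) B1(2) mod_mn[of y m n] unfolding y0_def cong_def by simp
    have yn: "y0 mod n = y2" using y(2) B2(2) mod_mn[of y m n] unfolding y0_def cong_def by simp
    have "gcd x0 m = g1" using gcd_mod_left[of m x0] xm B1(3) assms(2,3) by simp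
    moreover have "gcd x0 n = h1" using gcd_mod_left[of n x0] xn B2(3) assms(2,3) by simp
    ultimately have gx: "gcd x0 (m*n) = g1*h1" using gcd_split_iff[OF cop dv(1,3)] by blast
    have "gcd y0 m = g2" using gcd_mod_left[of m y0] ym B1(4) assms(2,3) by simp
    moreover have "gcd y0 n = h2" using gcd_mod_left[of n y0] yn B2(4) assms(2,3) by simp
    ultimately have gy: "gcd y0 (m*n) = g2*h2" using gcd_split_iff[OF cop dv(2,4)] by blast
    have "[x0 + y0 = z] (mod m)" using xm ym B1(5) sumc by (metis cong_def)
    moreover have "[x0 + y0 = z] (mod n)" using xn yn B2(5) sumc by (metis cong_def)
    ultimately have "[x0 + y0 = z] (mod m*n)" using cop coprime_cong_mult_nat by blast
    hence cg: "(x0 + y0) mod (m*n) = z mod (m*n)" by (simp add: cong_def)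
    have "x0 < m*n" "y0 < m*n" using mn by (simp_all add: x0_def y0_def)
    hence mem: "(x0, y0) \<in> ?A" using gx gy cg by (simp add: Aset_def)
    have pe: "((x1,y1),(x2,y2)) = ?phi (x0,y0)" using xm xn ym yn by simp
    show "((x1,y1),(x2,y2)) \<in> ?phi ` ?A" unfolding pe by (rule imageI[OF mem])
  qed
  have "bij_betw ?phi ?A ?B" unfolding bij_betw_def using inj into onto by blast
  hence "card ?A = card ?B" by (rule bij_betw_same_card)
  thus ?thesis by (simp add: card_cartesian_product)
qed





definition om :: "nat \<Rightarrow> int \<Rightarrow> complex" where
  "om N t = exp (2 * of_real pi * \<i> * of_int t / of_nat N)"

definition U0 :: "nat \<Rightarrow> nat set" where "U0 N = {j. j < N \<and> coprime j N}"

definition R0 :: "nat \<Rightarrow> int \<Rightarrow> complex" where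
  "R0 N x = (\<Sum>j\<in>U0 N. om N (int j * x))"

lemma finite_U0[simp]: "finite (U0 N)" by (simp add: U0_def)

lemma aux1: "(N::nat) \<noteq> 1 \<Longrightarrow> x \<le> N \<Longrightarrow> coprime x N \<Longrightarrow> x < N"
  by (metis coprime_1_right coprime_crossproduct_nat coprime_mult_left_iff
    linorder_not_less nat_mult_1_right order_antisym)
lemma aux2: "(N::nat) \<noteq> 1 \<Longrightarrow> coprime x N \<Longrightarrow> 0 < x"
  by (metis coprime_common_divisor_nat coprime_0_left_iff gr0I coprime_1_right)

lemma om_lin: assumes "N > 0" shows "om N (t + int N * k) = om N t"
proof -
  have "2 * of_real pi * \<i> * of_int (t + int N * k) / of_nat N
        = 2 * of_real pi * \<i> * of_int t / of_nat N + (2 * of_int k * pi) * \<i>"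
    using assms by (simp add: field_simps)
  moreover have "exp (2 * complex_of_int k * complex_of_real pi * \<i>) = 1"
    by (metis exp_2pi_1_int mult.assoc mult.commute)
  ultimately show ?thesis by (simp add: om_def exp_add)
qed

lemma om_cong: assumes "N > 0" "[t = t'] (mod int N)" shows "om N t = om N t'"
  using assms om_lin by (metis cong_iff_lin)

lemma rs_R0: assumes "N > 0" shows "ramanujan_sum N x = R0 N x"
proof (cases "N = 1")
  case True
  have "{j\<in>{1..N}. coprime j N} = {1}" "U0 N = {0}" using True by (auto simp: U0_def)
  moreover have "om 1 x = om 1 0" by (rule om_cong) auto
  ultimately show ?thesis using True by (simp add: ramanujan_sum_def R0_def om_def)
next
  case False
  have "{j\<in>{1..N}. coprime j N} = U0 N" using False assms
    by (auto simp: U0_def aux1) (metis aux2 One_nat_def Suc_leI)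
  thus ?thesis by (simp add: ramanujan_sum_def R0_def om_def)
qed

lemma card_U0: assumes "N > 0" shows "card (U0 N) = totient N"
proof (cases "N = 1")
  case True
  have "U0 N = {0}" using True by (auto simp: U0_def)
  thus ?thesis using True by simp
next
  case False
  have "totatives N = U0 N" using False assms
    by (auto simp: U0_def totatives_def) (simp_all add: aux1 aux2)
  thus ?thesis by (simp add: totient_def)
qed

lemma R0_cong: assumes "N > 0" "[x = x'] (mod int N)" shows "R0 N x = R0 N x'"
  unfolding R0_def
  by (rule sum.cong[OF refl], rule om_cong[OF assms(1)], rule cong_mult[OF cong_refl assms(2)])

lemma mod_as_lin: "int (a mod N) = int a + int N * (- int (a div N))"
proof -
  have "a = a div N * N + a mod N" by simp
  hence "int a = int (a div N) * int N + int (a mod N)" by (metis of_nat_add of_nat_mult)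
  thus ?thesis by (simp add: algebra_simps)
qed

lemma R0_unit: assumes "N > 0" "coprime u N" shows "R0 N (int u * x) = R0 N x"
proof -
  let ?h = "\<lambda>j. j * u mod N"
  have inj: "inj_on ?h (U0 N)"
  proof
    fix j j' assume "j \<in> U0 N" "j' \<in> U0 N" "?h j = ?h j'"
    hence "[j * u = j' * u] (mod N)" "j < N" "j' < N" by (auto simp: U0_def cong_def)
    hence "[j = j'] (mod N)" using cong_mult_rcancel_nat[OF assms(2)] by blast
    thus "j = j'" using \<open>j < N\<close> \<open>j' < N\<close> by (simp add: cong_def)
  qed
  have sub: "?h ` U0 N \<subseteq> U0 N"
    using assms by (auto simp: U0_def coprime_mod_left_iff)
  have img: "?h ` U0 N = U0 N" by (rule endo_inj_surj[OF finite_U0 sub inj])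
  have "R0 N (int u * x) = (\<Sum>j\<in>U0 N. om N (int (?h j) * x))"
    unfolding R0_def
  proof (rule sum.cong[OF refl])
    fix j
    have eq: "int (?h j) * x = int j * (int u * x) + int N * (- int (j * u div N) * x)"
      by (simp only: mod_as_lin) (simp add: algebra_simps)
    show "om N (int j * (int u * x)) = om N (int (?h j) * x)" by (simp only: eq om_lin[OF assms(1)])
  qed
  also have "\<dots> = (\<Sum>j\<in>?h ` U0 N. om N (int j * x))"
    by (simp add: sum.reindex[OF inj])
  finally show ?thesis using img by (simp add: R0_def)
qed




lemma om_mult: assumes "a > 0" "b > 0"
  shows "om a s * om b t = om (a*b) (s * int b + t * int a)"
proof -
  have "2 * of_real pi * \<i> * of_int s / of_nat a + 2 * of_real pi * \<i> * of_int t / of_nat b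
      = 2 * of_real pi * \<i> * of_int (s * int b + t * int a) / (of_nat (a*b) :: complex)"
    using assms by (simp add: field_simps)
  thus ?thesis by (simp add: om_def exp_add[symmetric])
qed

lemma coprime_lin: "coprime ((l1::nat) * b + l2 * a) a \<longleftrightarrow> coprime (l1 * b) a"
proof -
  have h: "gcd a (l2*a + l1*b) = gcd a (l1*b)" by (rule gcd_add_mult)
  have "gcd (l1*b + l2*a) a = gcd a (l2*a + l1*b)"
    by (subst add.commute) (rule gcd.commute)
  also have "\<dots> = gcd (l1*b) a" using h by (simp only: gcd.commute[of a "l1*b"])
  finally show ?thesis by (simp only: coprime_iff_gcd_eq_1)
qed

lemma R0_mult: assumes "a > 0" "b > 0" "coprime a b"
  shows "R0 (a*b) x = R0 a x * R0 b x"
proof -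
  let ?h = "\<lambda>(l1::nat, l2::nat). (l1 * b + l2 * a) mod (a * b)"
  let ?A = "U0 a \<times> U0 b"
  have inj: "inj_on ?h ?A"
  proof (rule inj_onI, clarify)
    fix l1 l2 l1' l2' assume m: "l1 \<in> U0 a" "l2 \<in> U0 b" "l1' \<in> U0 a" "l2' \<in> U0 b"
      and e: "(l1 * b + l2 * a) mod (a * b) = (l1' * b + l2' * a) mod (a * b)"
    have "(l1 * b + l2 * a) mod a = (l1' * b + l2' * a) mod a"
      using e mod_mn(1)[of "l1 * b + l2 * a" a b] mod_mn(1)[of "l1' * b + l2' * a" a b] by simp
    hence "[l1 * b = l1' * b] (mod a)" by (simp add: cong_def)
    moreover have "coprime b a" using assms(3) by (simp add: coprime_commute)
    ultimately have "[l1 = l1'] (mod a)" using cong_mult_rcancel_nat by blast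
    hence 1: "l1 = l1'" using m by (simp add: cong_def U0_def)
    have "(l1 * b + l2 * a) mod b = (l1' * b + l2' * a) mod b"
      using e mod_mn(2)[of "l1 * b + l2 * a" a b] mod_mn(2)[of "l1' * b + l2' * a" a b] by simp
    hence "[l2 * a = l2' * a] (mod b)" by (simp add: cong_def)
    hence "[l2 = l2'] (mod b)" using cong_mult_rcancel_nat assms(3) by blast
    hence "l2 = l2'" using m by (simp add: cong_def U0_def)
    thus "l1 = l1' \<and> l2 = l2'" using 1 by simp
  qed
  have sub: "?h ` ?A \<subseteq> U0 (a*b)"
  proof clarify
    fix l1 l2 assume m: "l1 \<in> U0 a" "l2 \<in> U0 b"
    have u: "coprime l1 a" "coprime l2 b" using m by (auto simp: U0_def)
    have ba: "coprime b a" using assms(3) by (simp add: coprime_commute)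
    have c1: "coprime (l1 * b) a" using u(1) ba by simp
    have c2: "coprime (l2 * a) b" using u(2) assms(3) by simp
    have "coprime (l1 * b + l2 * a) a" using c1 coprime_lin by blast
    moreover have "coprime (l1 * b + l2 * a) b" using c2 coprime_lin[of l2 a l1 b] by (simp add: add.commute)
    ultimately have "coprime (l1 * b + l2 * a) (a*b)" by simp
    hence "coprime ((l1 * b + l2 * a) mod (a*b)) (a*b)" using assms
      by (subst coprime_mod_left_iff) auto
    moreover have "(l1 * b + l2 * a) mod (a*b) < a*b" using assms by simp
    ultimately show "(l1 * b + l2 * a) mod (a*b) \<in> U0 (a*b)" by (simp add: U0_def)
  qed
  have "card (?h ` ?A) = card (U0 (a*b))"
    using card_image[OF inj] assms by (simp add: card_cartesian_product card_U0 totient_mult_coprime)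
  hence img: "?h ` ?A = U0 (a*b)" using card_subset_eq[OF finite_U0 sub] by simp
  have "R0 a x * R0 b x = (\<Sum>(l1,l2)\<in>?A. om a (int l1 * x) * om b (int l2 * x))"
    by (simp add: R0_def sum_product sum.cartesian_product)
  also have "\<dots> = (\<Sum>p\<in>?A. om (a*b) (int (?h p) * x))"
  proof (rule sum.cong[OF refl])
    fix p assume "p \<in> ?A"
    obtain l1 l2 where p: "p = (l1,l2)" by (cases p)
    have arg: "int l1 * x * int b + int l2 * x * int a = int (l1 * b + l2 * a) * x"
      by (simp add: algebra_simps)
    have "om a (int l1 * x) * om b (int l2 * x) = om (a*b) (int l1 * x * int b + int l2 * x * int a)"
      by (rule om_mult[OF assms(1,2)])
    also have "\<dots> = om (a*b) (int (l1 * b + l2 * a) * x)" by (simp only: arg)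
    also have "\<dots> = om (a*b) (int (?h (l1,l2)) * x)"
    proof -
      have eq: "int (?h (l1,l2)) * x = int (l1 * b + l2 * a) * x
           + int (a*b) * (- int ((l1 * b + l2 * a) div (a*b)) * x)"
        by (simp only: case_prod_conv mod_as_lin) (simp add: algebra_simps)
      have ab: "a * b > 0" using assms by simp
      show ?thesis unfolding eq by (rule om_lin[OF ab, symmetric])
    qed
    finally show "(case p of (l1, l2) \<Rightarrow> om a (int l1 * x) * om b (int l2 * x)) = om (a*b) (int (?h p) * x)"
      using p by simp
  qed
  also have "\<dots> = (\<Sum>j\<in>?h ` ?A. om (a*b) (int j * x))"
    by (simp add: sum.reindex[OF inj] comp_def)
  finally show ?thesis using img by (simp add: R0_def)
qed



lemma shift_exists:
  fixes j d e :: nat assumes "coprime j d" "e > 0"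
  shows "\<exists>j'. [j' = j] (mod d) \<and> coprime j' e"
proof -
  define P where "P = {p. prime p \<and> p dvd e \<and> \<not> p dvd j}"
  have "P \<subseteq> {..e}" using assms(2) by (auto simp: P_def dvd_imp_le)
  hence finP: "finite P" by (rule finite_subset) simp
  define t where "t = \<Prod>P"
  have "coprime (j + d * t) e"
  proof (rule ccontr)
    assume nc: "\<not> coprime (j + d * t) e"
    have "gcd (j + d * t) e \<noteq> 1" using nc coprime_iff_gcd_eq_1 by blast
    then obtain p where p: "prime p" "p dvd gcd (j + d * t) e" using prime_factor_nat[of "gcd (j + d * t) e"] by blast
    have pj': "p dvd j + d * t" using p(2) dvd_trans gcd_dvd1 by blast
    have pe: "p dvd e" using p(2) dvd_trans gcd_dvd2 by blast
    show False
    proof (cases "p dvd j")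
      case True
      have "\<not> p dvd d"
      proof
        assume "p dvd d"
        hence "p = 1" using coprime_common_divisor_nat[OF assms(1) True] by simp
        thus False using p(1) by simp
      qed
      moreover have "p dvd d * t" using True pj' by (simp add: dvd_add_right_iff)
      ultimately have "p dvd t" using prime_dvd_mult_iff[OF p(1), of d t] by simp
      hence "\<exists>q\<in>P. p dvd q" unfolding t_def using prime_dvd_prod_iff[OF finP p(1), of "\<lambda>x. x"] by simp
      then obtain q where q: "q \<in> P" "p dvd q" by blast
      have "prime q" using q(1) unfolding P_def by simp
      hence "p = q" using p(1) q(2) primes_dvd_imp_eq by blast
      thus False using q True unfolding P_def by auto
    next
      case False
      hence "p \<in> P" using p pe unfolding P_def by auto
      hence "p dvd t" unfolding t_def by (rule dvd_prod_eqI[OF finP]) simp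
      hence "p dvd d * t" by simp
      hence "p dvd j" using pj' by (simp add: dvd_add_left_iff)
      thus False using False by simp
    qed
  qed
  moreover have "[j + d * t = j] (mod d)" by (simp add: cong_def)
  ultimately show ?thesis by blast
qed

lemma sum_const_U0: "N > 0 \<Longrightarrow> (\<Sum>a\<in>U0 N. (c::complex)) = of_nat (totient N) * c"
  by (simp add: card_U0)

lemma R0_unit_mult:
  assumes "N > 0" "d dvd N" "e dvd N" "coprime a d"
  shows "R0 e (int a * int (N div d)) = R0 e (int (N div d))"
proof -
  have e0: "e > 0" using assms by (metis dvd_0_left_iff gr0I)
  obtain a' where a': "[a' = a] (mod d)" "coprime a' e" using shift_exists[OF assms(4) e0] by blast
  have "[int a' = int a] (mod int d)" using a'(1) by (simp add: cong_int_iff)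
  then obtain k where k: "int a = int a' + int d * k" using cong_iff_lin by blast
  obtain r where r: "N = e * r" using assms(3) by blast
  have dN: "int d * int (N div d) = int N" using assms(2) by (metis dvd_mult_div_cancel of_nat_mult)
  have "int a * int (N div d) = int a' * int (N div d) + int e * (int r * k)"
    using k dN r by (simp add: algebra_simps)
  hence "[int a' * int (N div d) = int a * int (N div d)] (mod int e)"
    using cong_iff_lin by blast
  hence "R0 e (int a * int (N div d)) = R0 e (int a' * int (N div d))"
    using R0_cong[OF e0] by (metis cong_sym)
  also have "\<dots> = R0 e (int (N div d))" using R0_unit[OF e0 a'(2)] .
  finally show ?thesis .
qed

lemma holder:
  assumes "N > 0" "d dvd N" "e dvd N"
  shows "of_nat (totient d) * R0 e (int (N div d)) = of_nat (totient e) * R0 d (int (N div e))"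
proof -
  have d0: "d > 0" and e0: "e > 0" using assms by (metis dvd_0_left_iff gr0I)+
  define q where "q = N div d"
  define r where "r = N div e"
  have qr: "q * d = r * e" using assms unfolding q_def r_def by simp
  have "of_nat (totient d) * R0 e (int q) = (\<Sum>a\<in>U0 d. R0 e (int a * int q))"
    using R0_unit_mult[OF assms(1,2,3)] d0 by (simp add: sum_const_U0[symmetric] U0_def q_def)
  also have "\<dots> = (\<Sum>a\<in>U0 d. \<Sum>b\<in>U0 e. om e (int b * (int a * int q)))"
    by (simp add: R0_def)
  also have "\<dots> = (\<Sum>b\<in>U0 e. \<Sum>a\<in>U0 d. om e (int b * (int a * int q)))"
    by (rule sum.swap)
  also have "\<dots> = (\<Sum>b\<in>U0 e. \<Sum>a\<in>U0 d. om d (int a * (int b * int r)))"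
  proof (intro sum.cong refl)
    fix a b
    have nat_eq: "b * (a * q) * d = a * (b * r) * e"
      using qr by (metis mult.assoc mult.left_commute)
    have "(of_nat (b * (a * q)) :: complex) * of_nat d = of_nat (a * (b * r)) * of_nat e"
      by (metis nat_eq of_nat_mult)
    hence "(of_nat (b * (a * q)) :: complex) / of_nat e = of_nat (a * (b * r)) / of_nat d"
      using d0 e0 by (simp add: frac_eq_eq)
    hence "(of_int (int b * (int a * int q)) :: complex) / of_nat e
          = of_int (int a * (int b * int r)) / of_nat d"
      by (metis of_int_of_nat_eq of_nat_mult)
    thus "om e (int b * (int a * int q)) = om d (int a * (int b * int r))"
      unfolding om_def by (metis times_divide_eq_right)
  qed
  also have "\<dots> = (\<Sum>b\<in>U0 e. R0 d (int b * int r))"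
    by (simp add: R0_def)
  also have "\<dots> = of_nat (totient e) * R0 d (int r)"
    using R0_unit_mult[OF assms(1,3,2)] e0 by (simp add: sum_const_U0[symmetric] U0_def r_def)
  finally show ?thesis unfolding q_def r_def .
qed


lemma ndiv_pos: "n > 0 \<Longrightarrow> num_divisors n > 0"
  unfolding num_divisors_def
  by (rule card_gt_0_iff[THEN iffD2]) (auto intro: finite_divisors_nat)

lemma ndiv_mult:
  assumes cop: "coprime m n" and "m > 0" "n > 0"
  shows "num_divisors (m*n) = num_divisors m * num_divisors n"
proof -
  let ?h = "\<lambda>(a,b). a * b :: nat"
  have inj: "inj_on ?h ({a. a dvd m} \<times> {b. b dvd n})"
  proof (rule inj_onI, clarify)
    fix a b a' b' assume "a dvd m" "b dvd n" "a' dvd m" "b' dvd n" "a * b = a' * b'"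
    moreover hence "a = a'" using gcd_dvd_split[OF cop] by metis
    moreover have "gcd (b*a) n = b" "gcd (b'*a') n = b'"
      using calculation cop gcd_dvd_split[of n m] by (auto simp: coprime_commute)
    ultimately show "a = a' \<and> b = b'" by (metis mult.commute)
  qed
  have img: "?h ` ({a. a dvd m} \<times> {b. b dvd n}) = {c. c dvd m*n}"
  proof
    show "?h ` ({a. a dvd m} \<times> {b. b dvd n}) \<subseteq> {c. c dvd m*n}" by (auto simp: mult_dvd_mono)
  next
    show "{c. c dvd m*n} \<subseteq> ?h ` ({a. a dvd m} \<times> {b. b dvd n})"
    proof
      fix c assume "c \<in> {c. c dvd m*n}"
      hence "c = gcd c m * gcd c n" using gcd_mult_cop[OF cop, of c] by (simp add: gcd_nat.absorb1)
      thus "c \<in> ?h ` ({a. a dvd m} \<times> {b. b dvd n})"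
        by (metis (mono_tags, lifting) case_prod_conv gcd_dvd2 mem_Collect_eq mem_Sigma_iff rev_image_eqI)
    qed
  qed
  have "card {c. c dvd m*n} = card ({a. a dvd m} \<times> {b. b dvd n})"
    using card_image[OF inj] img by simp
  thus ?thesis unfolding num_divisors_def by (simp add: card_cartesian_product)
qed

lemma lex_inj:
  assumes "1 \<le> i" "1 \<le> j" "1 \<le> i'" "i' \<le> tn" "1 \<le> j'" "j' \<le> tn"
  shows "lex_index tn i i' = lex_index tn j j' \<longleftrightarrow> i = j \<and> i' = j'"
proof
  assume e: "lex_index tn i i' = lex_index tn j j'"
  obtain a b r s where ab: "i = Suc a" "j = Suc b" "i' = Suc r" "j' = Suc s"
    using assms by (metis Suc_le_D One_nat_def)
  have rs: "r < tn" "s < tn" using assms ab by auto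
  have a: "a*tn + r = b*tn + s" using e ab by (simp add: lex_index_def)
  have d1: "(a*tn + r) div tn = a" "(b*tn + s) div tn = b" using rs by simp_all
  have d2: "(a*tn + r) mod tn = r" "(b*tn + s) mod tn = s" using rs by simp_all
  show "i = j \<and> i' = j'" using a d1 d2 ab by metis
qed simp

lemma lex_range:
  assumes "1 \<le> i" "i \<le> tm" "1 \<le> i'" "i' \<le> tn"
  shows "1 \<le> lex_index tn i i' \<and> lex_index tn i i' \<le> tm * tn"
proof -
  have "(i-1)*tn + i' \<le> (tm - 1) * tn + tn" using assms by (intro add_mono mult_right_mono) auto
  also have "\<dots> = tm * tn" using assms by (cases tm) auto
  finally show ?thesis using assms by (simp add: lex_index_def)
qed

lemma lex_surj:
  assumes "1 \<le> p" "p \<le> tm * tn"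
  shows "\<exists>i\<in>{1..tm}. \<exists>i'\<in>{1..tn}. p = lex_index tn i i'"
proof -
  have tn: "tn > 0" using assms by (cases tn) auto
  define i where "i = (p - 1) div tn + 1"
  define i' where "i' = (p - 1) mod tn + 1"
  have "p = lex_index tn i i'" unfolding lex_index_def i_def i'_def using assms
    by simp
  moreover have "i' \<in> {1..tn}" unfolding i'_def using tn by (simp add: Suc_leI)
  moreover have "(p - 1) div tn < tm" using assms tn
    by (metis One_nat_def Suc_le_lessD Suc_pred less_le_trans div_less_iff_less_mult le_refl)
  hence "i \<in> {1..tm}" unfolding i_def by auto
  ultimately show ?thesis by blast
qed

lemma dvd_coprime_div:
  fixes m n a b :: nat
  assumes "coprime m n" "a dvd m" "b dvd n"
  shows "coprime a b"
  using assms by (meson coprime_imp_coprime dvd_trans)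

lemma div_dvd_self: "a dvd (m::nat) \<Longrightarrow> (m div a) dvd m"
  by (metis dvd_div_mult_self dvd_triv_left)

lemma pos_of_dvd: "(a::nat) dvd m \<Longrightarrow> m > 0 \<Longrightarrow> a > 0"
  by (metis dvd_0_left_iff gr0I)

lemma W_prod:
  assumes cop: "coprime m n" and m0: "m > 0" and n0: "n > 0"
    and dv: "a dvd m" "b dvd n" "c dvd m" "g dvd n"
  shows "of_nat (totient (a*b)) * ramanujan_sum (c*g) (int ((m*n) div (a*b))) / of_nat (totient (c*g))
       = (of_nat (totient a) * ramanujan_sum c (int (m div a)) / of_nat (totient c))
       * (of_nat (totient b) * ramanujan_sum g (int (n div b)) / of_nat (totient g))"
proof -
  have pos: "a > 0" "b > 0" "c > 0" "g > 0" using dv m0 n0 pos_of_dvd by blast+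
  have cg: "coprime c g" "coprime a b" using dvd_coprime_div[OF cop] dv by blast+
  have x0: "(m*n) div (a*b) = (m div a) * (n div b)" using dv by (simp add: div_mult_div_if_dvd)
  have x: "int ((m*n) div (a*b)) = int (m div a) * int (n div b)"
    by (simp only: x0 of_nat_mult)
  have c1: "coprime (n div b) c" using dvd_coprime_div[OF cop dv(3) div_dvd_self[OF dv(2)]]
    by (simp add: coprime_commute)
  have c2: "coprime (m div a) g" using dvd_coprime_div[OF cop div_dvd_self[OF dv(1)] dv(4)] .
  have "ramanujan_sum (c*g) (int ((m*n) div (a*b))) = R0 c (int (m div a) * int (n div b)) * R0 g (int (m div a) * int (n div b))"
    using pos cg by (simp add: rs_R0 R0_mult x)
  also have "R0 c (int (m div a) * int (n div b)) = R0 c (int (m div a))"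
    using R0_unit[OF pos(3) c1, of "int (m div a)"] by (simp add: mult.commute)
  also have "R0 g (int (m div a) * int (n div b)) = R0 g (int (n div b))"
    using R0_unit[OF pos(4) c2, of "int (n div b)"] by simp
  finally have rs: "ramanujan_sum (c*g) (int ((m*n) div (a*b))) = ramanujan_sum c (int (m div a)) * ramanujan_sum g (int (n div b))"
    using pos by (simp add: rs_R0)
  show ?thesis using cg by (simp add: rs totient_mult_coprime)
qed

lemma M_prod:
  assumes cop: "coprime m n" and m0: "m > 0" and n0: "n > 0"
    and dv: "a dvd m" "c dvd m" "x dvd m" "b dvd n" "g dvd n" "y dvd n"
  shows "card (Aset (m*n) ((m*n) div (a*b)) ((m*n) div (c*g)) ((m*n) div (x*y)))
       = card (Aset m (m div a) (m div c) (m div x)) * card (Aset n (n div b) (n div g) (n div y))"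
proof -
  have e: "(m*n) div (a*b) = (m div a) * (n div b)" "(m*n) div (c*g) = (m div c) * (n div g)"
    "(m*n) div (x*y) = (m div x) * (n div y)" using dv by (simp_all add: div_mult_div_if_dvd)
  have "card (Aset (m*n) ((m div a) * (n div b)) ((m div c) * (n div g)) ((m div x) * (n div y)))
     = card (Aset m (m div a) (m div c) ((m div x) * (n div y))) * card (Aset n (n div b) (n div g) ((m div x) * (n div y)))"
    by (rule Aset_crt[OF cop m0 n0]) (use dv div_dvd_self in auto)
  also have "card (Aset m (m div a) (m div c) ((m div x) * (n div y))) = card (Aset m (m div a) (m div c) (m div x))"
  proof -
    have "coprime (n div y) m" using dvd_coprime_div[OF cop dvd_refl div_dvd_self[OF dv(6)]]
      by (simp add: coprime_commute)
    from Aset_unit[OF m0 this] show ?thesis by (simp add: mult.commute)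
  qed
  also have "card (Aset n (n div b) (n div g) ((m div x) * (n div y))) = card (Aset n (n div b) (n div g) (n div y))"
  proof -
    have "coprime (m div x) n" using dvd_coprime_div[OF cop div_dvd_self[OF dv(3)] dvd_refl] .
    from Aset_unit[OF n0 this] show ?thesis .
  qed
  finally show ?thesis using e by simp
qed

theorem mainTheorem6:
  fixes m n :: nat and d e f :: "nat \<Rightarrow> nat"
  assumes "m \<ge> 1" and "n \<ge> 1" and "coprime m n"
    and "divisor_ordering m d" and "divisor_ordering n e"
    and "\<forall>i\<in>{1..num_divisors m}. \<forall>i'\<in>{1..num_divisors n}.
           f (lex_index (num_divisors n) i i') = d i * e i'"
  shows "(\<forall>i\<in>{1..num_divisors m}. \<forall>j\<in>{1..num_divisors m}. \<forall>k\<in>{1..num_divisors m}.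
          \<forall>i'\<in>{1..num_divisors n}. \<forall>j'\<in>{1..num_divisors n}. \<forall>k'\<in>{1..num_divisors n}.
            Mmat (m * n) f (lex_index (num_divisors n) i i')
                 (lex_index (num_divisors n) j j') (lex_index (num_divisors n) k k')
              = Mmat m d i j k * Mmat n e i' j' k'
          \<and> Dmat (m * n) f (lex_index (num_divisors n) i i')
                 (lex_index (num_divisors n) j j') (lex_index (num_divisors n) k k')
              = Dmat m d i j k * Dmat n e i' j' k'
          \<and> Wmat (m * n) f (lex_index (num_divisors n) j j') (lex_index (num_divisors n) k k')
              = Wmat m d j k * Wmat n e j' k')
       \<and> (\<forall>j\<in>{1..num_divisors (m * n)}. \<forall>k\<in>{1..num_divisors (m * n)}.
            Wmat (m * n) f j k = Smat (m * n) f j k)"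
proof -
  define tm where "tm = num_divisors m"
  define tn where "tn = num_divisors n"
  have m0: "m > 0" and n0: "n > 0" using assms(1,2) by auto
  have cop: "coprime m n" using assms(3) .
  have dd: "\<And>i. i \<in> {1..tm} \<Longrightarrow> d i dvd m"
    using assms(4) unfolding divisor_ordering_def bij_betw_def tm_def by auto
  have ed: "\<And>i. i \<in> {1..tn} \<Longrightarrow> e i dvd n"
    using assms(5) unfolding divisor_ordering_def bij_betw_def tn_def by auto
  have fs: "\<And>i i'. i \<in> {1..tm} \<Longrightarrow> i' \<in> {1..tn} \<Longrightarrow> f (lex_index tn i i') = d i * e i'"
    using assms(6) unfolding tm_def tn_def by blast
  have Wk: "Wmat (m * n) f (lex_index tn j j') (lex_index tn k k') = Wmat m d j k * Wmat n e j' k'"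
    if "j \<in> {1..tm}" "k \<in> {1..tm}" "j' \<in> {1..tn}" "k' \<in> {1..tn}" for j k j' k'
    unfolding Wmat_def using that fs W_prod[OF cop m0 n0 dd[OF that(1)] ed[OF that(3)] dd[OF that(2)] ed[OF that(4)]]
    by simp
  have part1: "Mmat (m * n) f (lex_index tn i i') (lex_index tn j j') (lex_index tn k k')
              = Mmat m d i j k * Mmat n e i' j' k'
          \<and> Dmat (m * n) f (lex_index tn i i') (lex_index tn j j') (lex_index tn k k')
              = Dmat m d i j k * Dmat n e i' j' k'
          \<and> Wmat (m * n) f (lex_index tn j j') (lex_index tn k k') = Wmat m d j k * Wmat n e j' k'"
    if I: "i \<in> {1..tm}" "j \<in> {1..tm}" "k \<in> {1..tm}" "i' \<in> {1..tn}" "j' \<in> {1..tn}" "k' \<in> {1..tn}"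
    for i j k i' j' k'
  proof (intro conjI)
    show "Mmat (m * n) f (lex_index tn i i') (lex_index tn j j') (lex_index tn k k')
              = Mmat m d i j k * Mmat n e i' j' k'"
      unfolding Mmat_def acount_Aset using I fs
        M_prod[OF cop m0 n0 dd[OF I(1)] dd[OF I(2)] dd[OF I(3)] ed[OF I(4)] ed[OF I(5)] ed[OF I(6)]]
      by simp
    have li: "lex_index tn j j' = lex_index tn k k' \<longleftrightarrow> j = k \<and> j' = k'"
      by (rule lex_inj) (use I in auto)
    show "Dmat (m * n) f (lex_index tn i i') (lex_index tn j j') (lex_index tn k k')
              = Dmat m d i j k * Dmat n e i' j' k'"
      unfolding Dmat_def using li Wk[OF I(1,2,4,5)] by auto
    show "Wmat (m * n) f (lex_index tn j j') (lex_index tn k k') = Wmat m d j k * Wmat n e j' k'"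
      using Wk[OF I(2,3,5,6)] .
  qed
  have fd: "f j dvd m * n" if "j \<in> {1..num_divisors (m*n)}" for j
  proof -
    have "1 \<le> j" "j \<le> tm * tn" using that ndiv_mult[OF cop m0 n0] unfolding tm_def tn_def by auto
    then obtain i i' where "i \<in> {1..tm}" "i' \<in> {1..tn}" "j = lex_index tn i i'"
      using lex_surj by blast
    thus ?thesis using fs dd ed by (simp add: mult_dvd_mono)
  qed
  have part2: "Wmat (m * n) f j k = Smat (m * n) f j k"
    if "j \<in> {1..num_divisors (m*n)}" "k \<in> {1..num_divisors (m*n)}" for j k
  proof -
    have mn: "m * n > 0" using m0 n0 by simp
    have fj: "f j dvd m*n" and fk: "f k dvd m*n" using fd that by auto
    have pj: "f j > 0" and pk: "f k > 0" using fj fk mn pos_of_dvd by blast+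
    have H: "of_nat (totient (f k)) * R0 (f j) (int ((m*n) div f k))
           = of_nat (totient (f j)) * R0 (f k) (int ((m*n) div f j))"
      using holder[OF mn fk fj] .
    have "totient (f k) > 0" using pk by simp
    thus ?thesis unfolding Wmat_def Smat_def using H pj pk
      by (simp add: rs_R0 field_simps)
  qed
  show ?thesis using part1 part2 unfolding tm_def tn_def by blast
qed

end
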